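(* Let $p\in(0,1)$, $\gamma>0$, $B>0$, $w\in\mathbb{N}$, and for each $N\in\mathbb{N}$ let $(\xi_j^{(N)*})_{j=1}^N$ be the unique maximizer of $\mathcal{T}_N$. Let $(\xi_j^* )_{j\ge1}$ be the unique maximizer of $\mathcal{T}_\infty$ over admissible sequences. Then for every fixed $j\in\mathbb{N}$, the limit $\lim_{N\to\infty}\xi_j^{(N)*}$ exists and equals $\xi_j^*$.
   Context: Logarithms are base 2. A nonnegative sequence $(x_j)_{j\ge1}$ is admissible if $\sum_j x_j\le B$. For an admissible sequence, $$\mathcal{T}_\infty(x_1,x_2,\dots)=\sum_{k=1}^{w}p^2(1-p)^{k-1}\frac{k}{2}\log_2\!\Big(1+\gamma\frac{B}{k}\Big)+\sum_{j=1}^{\infty}p(1-p)^{j+w-1}\frac12\log_2(1+\gamma x_j)+\sum_{k=1}^{\infty}p^2(1-p)^{k+w-1}\frac{w}{2}\log_2\!\Big(1+\gamma\frac{B-\sum_{j=1}^{k}x_j}{w}\Big).$$ The paper takes as given that $\mathcal{T}_\infty$ has a unique maximizer over admissible sequences. For $N\in\mathbb{N}$ and $\xi_1,\dots,\xi_N\ge0$ with $\sum_{j=1}^N\xi_j\le B$, define $\mathcal{T}_N(\xi_1,\dots,\xi_N)=\mathcal{T}_\infty(\xi_1,\dots,\xi_N,0,0,\dots)$. $\mathcal{T}_N$ has a unique maximizer over this compact set, denoted $(\xi_j^{(N)*})_{j=1}^N$. *)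

theory Defs
  imports "HOL-Analysis.Analysis"
begin

text \<open>Sequences are functions nat => real indexed from 1; the value at index 0 is ignored.
  Logarithms are base 2.\<close>

definition admissible :: "real \<Rightarrow> (nat \<Rightarrow> real) \<Rightarrow> bool" where
  "admissible B x \<longleftrightarrow> (\<forall>j\<ge>1. 0 \<le> x j) \<and> (\<forall>n. (\<Sum>j=1..n. x j) \<le> B)"

definition Tinf :: "real \<Rightarrow> real \<Rightarrow> real \<Rightarrow> nat \<Rightarrow> (nat \<Rightarrow> real) \<Rightarrow> real" where
  "Tinf p \<gamma> B w x =
     (\<Sum>k=1..w. p^2 * (1-p)^(k-1) * (real k / 2) * log 2 (1 + \<gamma> * B / real k))
   + (\<Sum>j. p * (1-p)^(j + w) * (1/2) * log 2 (1 + \<gamma> * x (Suc j)))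
   + (\<Sum>k. p^2 * (1-p)^(k + w) * (real w / 2)
            * log 2 (1 + \<gamma> * (B - (\<Sum>i=1..Suc k. x i)) / real w))"

definition feasibleN :: "real \<Rightarrow> nat \<Rightarrow> (nat \<Rightarrow> real) \<Rightarrow> bool" where
  "feasibleN B N \<xi> \<longleftrightarrow> (\<forall>j\<in>{1..N}. 0 \<le> \<xi> j) \<and> (\<Sum>j=1..N. \<xi> j) \<le> B"

definition TN :: "real \<Rightarrow> real \<Rightarrow> real \<Rightarrow> nat \<Rightarrow> nat \<Rightarrow> (nat \<Rightarrow> real) \<Rightarrow> real" where
  "TN p \<gamma> B w N \<xi> = Tinf p \<gamma> B w (\<lambda>j. if j \<le> N then \<xi> j else 0)"

end

theory Submission
  imports Defs
begin

definition F2 :: "real \<Rightarrow> real \<Rightarrow> nat \<Rightarrow> (nat \<Rightarrow> real) \<Rightarrow> nat \<Rightarrow> real" where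
  "F2 p \<gamma> w x j = p * (1-p)^(j + w) * (1/2) * log 2 (1 + \<gamma> * x (Suc j))"
definition F3 :: "real \<Rightarrow> real \<Rightarrow> real \<Rightarrow> nat \<Rightarrow> (nat \<Rightarrow> real) \<Rightarrow> nat \<Rightarrow> real" where
  "F3 p \<gamma> B w x k = p^2 * (1-p)^(k + w) * (real w / 2)
            * log 2 (1 + \<gamma> * (B - (\<Sum>i=1..Suc k. x i)) / real w)"
definition C0 :: "real \<Rightarrow> real \<Rightarrow> real \<Rightarrow> nat \<Rightarrow> real" where
  "C0 p \<gamma> B w = (\<Sum>k=1..w. p^2 * (1-p)^(k-1) * (real k / 2) * log 2 (1 + \<gamma> * B / real k))"

lemma Tinf_split: "Tinf p \<gamma> B w x = C0 p \<gamma> B w + suminf (F2 p \<gamma> w x) + suminf (F3 p \<gamma> B w x)"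
  unfolding Tinf_def F2_def F3_def C0_def by simp

lemma adm_bound: assumes "admissible B x" "1 \<le> i" shows "0 \<le> x i" "x i \<le> B"
proof -
  show "0 \<le> x i" using assms unfolding admissible_def by auto
  have "x i \<le> (\<Sum>j=1..i. x j)"
    by (rule member_le_sum) (use assms in \<open>auto simp: admissible_def\<close>)
  also have "\<dots> \<le> B" using assms unfolding admissible_def by auto
  finally show "x i \<le> B" .
qed

lemma adm_S: assumes "admissible B x" shows "0 \<le> B - (\<Sum>i=1..n. x i)" "B - (\<Sum>i=1..n. x i) \<le> B"
proof -
  show "0 \<le> B - (\<Sum>i=1..n. x i)" using assms unfolding admissible_def by auto
  have "0 \<le> (\<Sum>i=1..n. x i)" by (rule sum_nonneg) (use assms in \<open>auto simp: admissible_def\<close>)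
  then show "B - (\<Sum>i=1..n. x i) \<le> B" by simp
qed

lemma feas_adm: assumes "feasibleN B N \<xi>" shows "admissible B (\<lambda>i. if i \<le> N then \<xi> i else 0)"
proof -
  have nn: "\<forall>j\<in>{1..N}. 0 \<le> \<xi> j" and sB: "(\<Sum>j=1..N. \<xi> j) \<le> B" using assms by (auto simp: feasibleN_def)
  have "(\<Sum>i=1..n. (if i \<le> N then \<xi> i else 0)) \<le> B" for n
  proof -
    have "(\<Sum>i=1..n. (if i \<le> N then \<xi> i else 0)) = (\<Sum>i\<in>{1..n} \<inter> {i. i \<le> N}. \<xi> i)"
      by (simp add: sum.If_cases)
    also have "\<dots> \<le> (\<Sum>i=1..N. \<xi> i)"
      by (rule sum_mono2) (use nn in auto)
    finally show ?thesis using sB by simp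
  qed
  moreover have "\<forall>j\<ge>1. 0 \<le> (if j \<le> N then \<xi> j else 0)" using nn by auto
  ultimately show ?thesis unfolding admissible_def by auto
qed

lemma adm_feas: assumes "admissible B x" shows "feasibleN B N x"
  using assms unfolding admissible_def feasibleN_def by auto

lemma adm_mid: assumes "admissible B x" "admissible B y" shows "admissible B (\<lambda>i. (x i + y i)/2)"
proof -
  have hs: "(\<Sum>i=1..n. (x i + y i)/2) = ((\<Sum>i=1..n. x i) + (\<Sum>i=1..n. y i))/2" for n
    by (simp only: sum_divide_distrib[symmetric] sum.distrib)
  then show ?thesis unfolding admissible_def
  proof (intro conjI allI impI)
    fix n show "(\<Sum>i=1..n. (x i + y i)/2) \<le> B"
    proof -
      have "sum x {1..n} \<le> B" "sum y {1..n} \<le> B" using assms unfolding admissible_def by auto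
      then show ?thesis unfolding hs by simp
    qed
  qed (use assms in \<open>auto simp: admissible_def\<close>)
qed

lemma conc:
  fixes q a b K :: real
  assumes "0\<le>a" "0\<le>b" "a\<le>K" "b\<le>K" "0<q"
  shows "log 2 (1+q*a) + log 2 (1+q*b) + log 2 (1 + q^2*(a-b)^2/(4*(1+q*K)^2))
         \<le> 2 * log 2 (1+q*((a+b)/2))"
proof -
  define P where "P = (1+q*a)*(1+q*b)"
  define R where "R = (1+q*K)^2"
  define D where "D = q^2*(a-b)^2"
  have Pp: "0 < P" unfolding P_def using assms by (simp add: add_pos_nonneg)
  have PR: "P \<le> R" unfolding P_def R_def power2_eq_square
    using assms by (intro mult_mono) (auto simp: mult_left_mono)
  have Rp: "0 < R" using Pp PR by simp
  have Dn: "0 \<le> D" unfolding D_def by simp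
  have e1: "P * (1 + D/(4*R)) \<le> P + D/4"
  proof -
    have "P * (D/(4*R)) \<le> D/4" using PR Rp Dn Pp
      by (simp add: field_simps mult_left_mono)
    then show ?thesis by (simp add: algebra_simps)
  qed
  have e2: "P + D/4 = (1+q*((a+b)/2))^2" unfolding P_def D_def by (simp add: field_simps power2_eq_square)
  have pos1: "0 < 1 + D/(4*R)" using Dn Rp by (simp add: add_pos_nonneg)
  have "log 2 (1+q*a) + log 2 (1+q*b) + log 2 (1 + D/(4*R)) = log 2 (P * (1 + D/(4*R)))"
  proof -
    have "0 < 1+q*a" "0 < 1+q*b" using assms by (auto simp: add_pos_nonneg)
    then show ?thesis unfolding P_def using pos1 by (simp add: log_mult)
  qed
  also have "\<dots> \<le> log 2 ((1+q*((a+b)/2))^2)"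
    using e1 e2 Pp pos1 by (intro log_mono) (auto simp: mult_pos_pos)
  also have "\<dots> = 2 * log 2 (1+q*((a+b)/2))"
    using assms by (subst log_nat_power) (auto simp: add_pos_nonneg)
  finally show ?thesis unfolding D_def R_def by simp
qed


lemma geo_summ: fixes f :: "nat \<Rightarrow> real"
  assumes "\<And>k. 0 \<le> f k" "\<And>k. f k \<le> r^k * M" "0 \<le> r" "r < 1"
  shows "summable f"
proof (rule summable_comparison_test)
  show "\<exists>N. \<forall>n\<ge>N. norm (f n) \<le> r^n * M" using assms by auto
  show "summable (\<lambda>n. r^n * M)" using assms by (intro summable_mult2 summable_geometric) auto
qed

lemma log_bounds: assumes "0 \<le> t" "t \<le> K" "0 < q"
  shows "0 \<le> log 2 (1 + q*t)" "log 2 (1 + q*t) \<le> log 2 (1 + q*K)"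
proof -
  have "0 \<le> q*t" using assms by simp
  then show "0 \<le> log 2 (1 + q*t)" by simp
  show "log 2 (1 + q*t) \<le> log 2 (1 + q*K)"
    using assms \<open>0 \<le> q*t\<close> by (intro log_mono) (auto intro!: mult_left_mono simp: add_pos_nonneg)
qed

lemma F2_bound: assumes "0<p" "p<1" "0<\<gamma>" "admissible B x"
  shows "0 \<le> F2 p \<gamma> w x j" "F2 p \<gamma> w x j \<le> (1-p)^j * (p*(1-p)^w/2 * log 2 (1+\<gamma>*B))"
proof -
  have b: "0 \<le> x (Suc j)" "x (Suc j) \<le> B" using adm_bound[OF assms(4), of "Suc j"] by auto
  note lb = log_bounds[OF b assms(3)]
  have wp: "0 \<le> p * (1-p)^(j + w) * (1/2)" using assms by auto
  show "0 \<le> F2 p \<gamma> w x j" unfolding F2_def using wp lb by simp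
  have "F2 p \<gamma> w x j \<le> p * (1-p)^(j + w) * (1/2) * log 2 (1+\<gamma>*B)"
    unfolding F2_def using wp lb by (intro mult_left_mono) auto
  also have "\<dots> = (1-p)^j * (p*(1-p)^w/2 * log 2 (1+\<gamma>*B))" by (simp add: power_add)
  finally show "F2 p \<gamma> w x j \<le> (1-p)^j * (p*(1-p)^w/2 * log 2 (1+\<gamma>*B))" .
qed

lemma F3_arg: assumes "1 \<le> w" 
  shows "\<gamma> * (B - s) / real w = (\<gamma> / real w) * (B - s)" by simp

lemma F3_bound: assumes "0<p" "p<1" "0<\<gamma>" "1 \<le> w" "admissible B x"
  shows "0 \<le> F3 p \<gamma> B w x k" "F3 p \<gamma> B w x k \<le> (1-p)^k * (p^2*(1-p)^w*(real w/2) * log 2 (1+\<gamma>*B))"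
proof -
  define s where "s = (\<Sum>i=1..Suc k. x i)"
  have b: "0 \<le> B - s" "B - s \<le> B" using adm_S[OF assms(5), of "Suc k"] unfolding s_def by auto
  have q: "0 < \<gamma> / real w" using assms by auto
  note lb = log_bounds[OF b q]
  have "log 2 (1 + \<gamma> / real w * B) \<le> log 2 (1 + \<gamma> * B)"
  proof (rule log_mono)
    have "0 \<le> B" using b by simp
    have "\<gamma> / real w * B \<le> \<gamma> * B" using assms \<open>0 \<le> B\<close>
      by (intro mult_right_mono) (auto simp: field_simps)
    then show "1 + \<gamma> / real w * B \<le> 1 + \<gamma> * B" by simp
    have "0 \<le> \<gamma> / real w * B" using q \<open>0 \<le> B\<close> by (intro mult_nonneg_nonneg) auto
    then show "0 < 1 + \<gamma> / real w * B" by linarith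
  qed simp
  with lb have lb2: "0 \<le> log 2 (1 + \<gamma> * (B - s) / real w)" "log 2 (1 + \<gamma> * (B - s) / real w) \<le> log 2 (1+\<gamma>*B)"
    by auto
  have wp: "0 \<le> p^2 * (1-p)^(k + w) * (real w / 2)" using assms by auto
  show "0 \<le> F3 p \<gamma> B w x k" unfolding F3_def s_def[symmetric] using wp lb2 by simp
  have "F3 p \<gamma> B w x k \<le> p^2 * (1-p)^(k + w) * (real w / 2) * log 2 (1+\<gamma>*B)"
    unfolding F3_def s_def[symmetric] using wp lb2 by (intro mult_left_mono) auto
  also have "\<dots> = (1-p)^k * (p^2*(1-p)^w*(real w/2) * log 2 (1+\<gamma>*B))" by (simp add: power_add)
  finally show "F3 p \<gamma> B w x k \<le> (1-p)^k * (p^2*(1-p)^w*(real w/2) * log 2 (1+\<gamma>*B))" .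
qed

lemma F2_summ: assumes "0<p" "p<1" "0<\<gamma>" "admissible B x" shows "summable (F2 p \<gamma> w x)"
  by (rule geo_summ[OF F2_bound(1)[OF assms] F2_bound(2)[OF assms]]) (use assms in auto)

lemma F3_summ: assumes "0<p" "p<1" "0<\<gamma>" "1 \<le> w" "admissible B x" shows "summable (F3 p \<gamma> B w x)"
  by (rule geo_summ[OF F3_bound(1)[OF assms] F3_bound(2)[OF assms]]) (use assms in auto)


lemma key:
  assumes "0<p" "p<1" "0<\<gamma>" "1 \<le> w" "admissible B x" "admissible B y"
  shows "Tinf p \<gamma> B w x + Tinf p \<gamma> B w y
     + p * (1-p)^(n + w) * (1/2) * log 2 (1 + \<gamma>^2*(x (Suc n) - y (Suc n))^2/(4*(1+\<gamma>*B)^2))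
     \<le> 2 * Tinf p \<gamma> B w (\<lambda>i. (x i + y i)/2)"
proof -
  define m where "m = (\<lambda>i. (x i + y i)/2)"
  have am: "admissible B m" unfolding m_def by (rule adm_mid[OF assms(5,6)])
  define E where "E j = log 2 (1 + \<gamma>^2*(x (Suc j) - y (Suc j))^2/(4*(1+\<gamma>*B)^2))" for j
  define G2 where "G2 j = 2 * F2 p \<gamma> w m j - F2 p \<gamma> w x j - F2 p \<gamma> w y j" for j
  define G3 where "G3 k = 2 * F3 p \<gamma> B w m k - F3 p \<gamma> B w x k - F3 p \<gamma> B w y k" for k
  have G2b: "p * (1-p)^(j + w) * (1/2) * E j \<le> G2 j" for j
  proof -
    have b1: "0 \<le> x (Suc j)" "x (Suc j) \<le> B" using adm_bound[OF assms(5), of "Suc j"] by auto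
    have b2: "0 \<le> y (Suc j)" "y (Suc j) \<le> B" using adm_bound[OF assms(6), of "Suc j"] by auto
    have c: "log 2 (1+\<gamma>*x (Suc j)) + log 2 (1+\<gamma>*y (Suc j)) + E j \<le> 2 * log 2 (1+\<gamma>*((x (Suc j)+y (Suc j))/2))"
      unfolding E_def by (rule conc) (use b1 b2 assms in auto)
    have wp: "0 \<le> p * (1-p)^(j + w) * (1/2)" using assms by auto
    from mult_left_mono[OF c wp] show ?thesis
      unfolding G2_def F2_def m_def by (simp add: algebra_simps)
  qed
  have E0: "0 \<le> E j" for j
  proof -
    have "0 \<le> \<gamma>^2*(x (Suc j) - y (Suc j))^2/(4*(1+\<gamma>*B)^2)" by simp
    then show ?thesis unfolding E_def
      by (subst zero_le_log_cancel_iff) (auto simp: add_pos_nonneg)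
  qed
  have G2n: "0 \<le> G2 j" for j
  proof -
    have "0 \<le> p * (1-p)^(j + w) * (1/2) * E j" using E0[of j] assms by auto
    then show ?thesis using G2b[of j] by linarith
  qed
  have G3n: "0 \<le> G3 k" for k
  proof -
    define a where "a = B - (\<Sum>i=1..Suc k. x i)"
    define b where "b = B - (\<Sum>i=1..Suc k. y i)"
    have ab: "0 \<le> a" "a \<le> B" "0 \<le> b" "b \<le> B" unfolding a_def b_def
      using adm_S[OF assms(5), of "Suc k"] adm_S[OF assms(6), of "Suc k"] by auto
    have sm: "B - (\<Sum>i=1..Suc k. m i) = (a+b)/2" unfolding a_def b_def m_def
      by (simp add: sum_divide_distrib[symmetric] sum.distrib field_simps)
    have q: "0 < \<gamma> / real w" using assms by auto
    have c: "log 2 (1+(\<gamma> / real w)*a) + log 2 (1+(\<gamma> / real w)*b) + log 2 (1 + (\<gamma> / real w)^2*(a-b)^2/(4*(1+(\<gamma> / real w)*B)^2))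
        \<le> 2 * log 2 (1+(\<gamma> / real w)*((a+b)/2))"
      by (rule conc) (use ab q in auto)
    have "0 \<le> (\<gamma> / real w)^2*(a-b)^2/(4*(1+(\<gamma> / real w)*B)^2)" by simp
    then have "0 \<le> log 2 (1 + (\<gamma> / real w)^2*(a-b)^2/(4*(1+(\<gamma> / real w)*B)^2))"
      by (subst zero_le_log_cancel_iff) (auto simp: add_pos_nonneg)
    with c have c2: "log 2 (1+(\<gamma> / real w)*a) + log 2 (1+(\<gamma> / real w)*b) \<le> 2 * log 2 (1+(\<gamma> / real w)*((a+b)/2))"
      by linarith
    have wp: "0 \<le> p^2 * (1-p)^(k + w) * (real w / 2)" using assms by auto
    have eq: "\<gamma> * t / real w = (\<gamma> / real w) * t" for t by simp
    from mult_left_mono[OF c2 wp] show ?thesis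
      unfolding G3_def F3_def sm a_def[symmetric] b_def[symmetric] eq by (simp add: algebra_simps)
  qed
  have s2x: "summable (F2 p \<gamma> w x)" "summable (F2 p \<gamma> w y)" "summable (F2 p \<gamma> w m)"
    using F2_summ assms am by auto
  have s3x: "summable (F3 p \<gamma> B w x)" "summable (F3 p \<gamma> B w y)" "summable (F3 p \<gamma> B w m)"
    using F3_summ assms am by auto
  have sG2: "summable G2" and eG2: "suminf G2 = 2 * suminf (F2 p \<gamma> w m) - suminf (F2 p \<gamma> w x) - suminf (F2 p \<gamma> w y)"
  proof -
    have "G2 sums (2 * suminf (F2 p \<gamma> w m) - suminf (F2 p \<gamma> w x) - suminf (F2 p \<gamma> w y))"
      unfolding G2_def
      by (intro sums_diff sums_mult summable_sums s2x)
    then show "summable G2" "suminf G2 = 2 * suminf (F2 p \<gamma> w m) - suminf (F2 p \<gamma> w x) - suminf (F2 p \<gamma> w y)"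
      by (auto simp: sums_iff)
  qed
  have sG3: "summable G3" and eG3: "suminf G3 = 2 * suminf (F3 p \<gamma> B w m) - suminf (F3 p \<gamma> B w x) - suminf (F3 p \<gamma> B w y)"
  proof -
    have "G3 sums (2 * suminf (F3 p \<gamma> B w m) - suminf (F3 p \<gamma> B w x) - suminf (F3 p \<gamma> B w y))"
      unfolding G3_def
      by (intro sums_diff sums_mult summable_sums s3x)
    then show "summable G3" "suminf G3 = 2 * suminf (F3 p \<gamma> B w m) - suminf (F3 p \<gamma> B w x) - suminf (F3 p \<gamma> B w y)"
      by (auto simp: sums_iff)
  qed
  have "G2 n \<le> suminf G2"
    using sum_le_suminf[OF sG2, of "{n}"] G2n by auto
  moreover have "0 \<le> suminf G3" using suminf_nonneg[OF sG3] G3n by auto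
  ultimately have "E' \<le> suminf G2 + suminf G3" if "E' \<le> G2 n" for E' using that by linarith
  from this[OF G2b[of n]] have "p * (1-p)^(n + w) * (1/2) * E n \<le> suminf G2 + suminf G3" .
  then show ?thesis
    unfolding Tinf_split m_def[symmetric] E_def[symmetric] eG2 eG3 by (simp add: algebra_simps)
qed


lemma trunc_lim:
  assumes "0<p" "p<1" "0<\<gamma>" "1 \<le> w" "admissible B x"
  shows "(\<lambda>N. Tinf p \<gamma> B w (\<lambda>i. if i \<le> N then x i else 0)) \<longlonglongrightarrow> Tinf p \<gamma> B w x"
proof -
  define z where "z N = (\<lambda>i. if i \<le> N then x i else 0)" for N :: nat
  have az: "admissible B (z N)" for N unfolding z_def by (rule feas_adm[OF adm_feas[OF assms(5)]])
  have t2: "(\<lambda>N. suminf (F2 p \<gamma> w (z N))) \<longlonglongrightarrow> suminf (F2 p \<gamma> w x)"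
  proof -
    have "eventually (\<lambda>n. summable (\<lambda>k. norm (F2 p \<gamma> w (z n) k))) sequentially \<and>
           summable (\<lambda>n. norm (F2 p \<gamma> w x n)) \<and>
           ((\<lambda>n. suminf (\<lambda>k. F2 p \<gamma> w (z n) k)) \<longlongrightarrow> suminf (F2 p \<gamma> w x)) sequentially"
    proof (rule tannerys_theorem)
      fix k
      show "(\<lambda>n. F2 p \<gamma> w (z n) k) \<longlonglongrightarrow> F2 p \<gamma> w x k"
      proof (rule tendsto_eventually)
        show "\<forall>\<^sub>F n in sequentially. F2 p \<gamma> w (z n) k = F2 p \<gamma> w x k"
          using eventually_ge_at_top[of "Suc k"] by eventually_elim (simp add: F2_def z_def)
      qed
    next
      show "\<forall>\<^sub>F (k, n) in at_top \<times>\<^sub>F sequentially. norm (F2 p \<gamma> w (z n) k) \<le> (1-p)^k * (p*(1-p)^w/2 * log 2 (1+\<gamma>*B))"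
        by (rule always_eventually) (use F2_bound[OF assms(1-3) az] in auto)
      show "summable (\<lambda>k. (1-p)^k * (p*(1-p)^w/2 * log 2 (1+\<gamma>*B)))"
        using assms by (intro summable_mult2 summable_geometric) auto
    qed simp
    then show ?thesis by simp
  qed
  have t3: "(\<lambda>N. suminf (F3 p \<gamma> B w (z N))) \<longlonglongrightarrow> suminf (F3 p \<gamma> B w x)"
  proof -
    have "eventually (\<lambda>n. summable (\<lambda>k. norm (F3 p \<gamma> B w (z n) k))) sequentially \<and>
           summable (\<lambda>n. norm (F3 p \<gamma> B w x n)) \<and>
           ((\<lambda>n. suminf (\<lambda>k. F3 p \<gamma> B w (z n) k)) \<longlongrightarrow> suminf (F3 p \<gamma> B w x)) sequentially"
    proof (rule tannerys_theorem)
      fix k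
      show "(\<lambda>n. F3 p \<gamma> B w (z n) k) \<longlonglongrightarrow> F3 p \<gamma> B w x k"
      proof (rule tendsto_eventually)
        show "\<forall>\<^sub>F n in sequentially. F3 p \<gamma> B w (z n) k = F3 p \<gamma> B w x k"
          using eventually_ge_at_top[of "Suc k"]
        proof eventually_elim
          case (elim n)
          have "(\<Sum>i=1..Suc k. z n i) = (\<Sum>i=1..Suc k. x i)"
            by (rule sum.cong) (use elim in \<open>auto simp: z_def\<close>)
          then show ?case by (simp add: F3_def)
        qed
      qed
    next
      show "\<forall>\<^sub>F (k, n) in at_top \<times>\<^sub>F sequentially. norm (F3 p \<gamma> B w (z n) k) \<le> (1-p)^k * (p^2*(1-p)^w*(real w/2) * log 2 (1+\<gamma>*B))"
        by (rule always_eventually) (use F3_bound[OF assms(1-4) az] in auto)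
      show "summable (\<lambda>k. (1-p)^k * (p^2*(1-p)^w*(real w/2) * log 2 (1+\<gamma>*B)))"
        using assms by (intro summable_mult2 summable_geometric) auto
    qed simp
    then show ?thesis by simp
  qed
  show ?thesis unfolding z_def[symmetric] Tinf_split
    by (intro tendsto_add tendsto_const t2 t3)
qed


theorem lemma9:
  fixes p \<gamma> B :: real and w :: nat
    and \<xi>N :: "nat \<Rightarrow> nat \<Rightarrow> real" and \<xi>s :: "nat \<Rightarrow> real"
  assumes "0 < p" "p < 1" "0 < \<gamma>" "0 < B" "1 \<le> w"
    and maxN: "\<And>N. N \<ge> 1 \<Longrightarrow> feasibleN B N (\<xi>N N) \<and>
          (\<forall>\<eta>. feasibleN B N \<eta> \<longrightarrow> TN p \<gamma> B w N \<eta> \<le> TN p \<gamma> B w N (\<xi>N N))"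
    and uniqN: "\<And>N \<eta>. N \<ge> 1 \<Longrightarrow> feasibleN B N \<eta> \<Longrightarrow>
          (\<forall>\<zeta>. feasibleN B N \<zeta> \<longrightarrow> TN p \<gamma> B w N \<zeta> \<le> TN p \<gamma> B w N \<eta>) \<Longrightarrow>
          (\<forall>j\<in>{1..N}. \<eta> j = \<xi>N N j)"
    and adm: "admissible B \<xi>s"
    and max: "\<And>x. admissible B x \<Longrightarrow> Tinf p \<gamma> B w x \<le> Tinf p \<gamma> B w \<xi>s"
    and uniq: "\<And>x. admissible B x \<Longrightarrow>
          (\<forall>y. admissible B y \<longrightarrow> Tinf p \<gamma> B w y \<le> Tinf p \<gamma> B w x) \<Longrightarrow>
          (\<forall>j\<ge>1. x j = \<xi>s j)"
    and "1 \<le> j"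
  shows "(\<lambda>N. \<xi>N N j) \<longlonglongrightarrow> \<xi>s j"
proof -
  define T where "T = Tinf p \<gamma> B w"
  define y where "y N = (\<lambda>i. if i \<le> N then \<xi>N N i else 0)" for N :: nat
  define z where "z N = (\<lambda>i. if i \<le> N then \<xi>s i else 0)" for N :: nat
  define d where "d N = y N j - \<xi>s j" for N
  define c where "c = p * (1-p)^((j-1) + w) * (1/2)"
  define K where "K = 4*(1+\<gamma>*B)^2"
  define g where "g N = \<gamma>^2*(d N)^2/K" for N
  have cp: "0 < c" unfolding c_def using assms by auto
  have "0 < 1+\<gamma>*B" using assms by (simp add: add_pos_pos)
  then have Kp: "0 < K" unfolding K_def by simp
  have gn: "0 \<le> g N" for N unfolding g_def using Kp by simp
  have sj: "Suc (j-1) = j" using assms by simp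
  have bnd: "c * log 2 (1 + g N) \<le> T \<xi>s - T (z N)" if "N \<ge> 1" for N
  proof -
    have ay: "admissible B (y N)" unfolding y_def using maxN[OF that] by (intro feas_adm) auto
    have "TN p \<gamma> B w N \<xi>s \<le> TN p \<gamma> B w N (\<xi>N N)" using maxN[OF that] adm_feas[OF adm] by auto
    then have tz: "T (z N) \<le> T (y N)" unfolding TN_def T_def y_def z_def .
    have tm: "T (\<lambda>i. (y N i + \<xi>s i)/2) \<le> T \<xi>s" unfolding T_def
      by (rule max[OF adm_mid[OF ay adm]])
    have "T (y N) + T \<xi>s + c * log 2 (1 + g N) \<le> 2 * T (\<lambda>i. (y N i + \<xi>s i)/2)"
      using key[OF assms(1,2,3,5) ay adm, of "j-1"] unfolding sj T_def c_def g_def d_def K_def .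
    then show ?thesis using tz tm by linarith
  qed
  have lpos: "0 \<le> c * log 2 (1 + g N)" for N
  proof -
    have "0 \<le> log 2 (1 + g N)" using gn[of N]
      by (subst zero_le_log_cancel_iff) (auto simp: add_pos_nonneg)
    then show ?thesis using cp by simp
  qed
  have "(\<lambda>N. T \<xi>s - T (z N)) \<longlonglongrightarrow> T \<xi>s - T \<xi>s"
    unfolding T_def z_def by (intro tendsto_diff tendsto_const trunc_lim assms adm)
  then have lim0: "(\<lambda>N. T \<xi>s - T (z N)) \<longlonglongrightarrow> 0" by simp
  have "(\<lambda>N. c * log 2 (1 + g N)) \<longlonglongrightarrow> 0"
  proof (rule tendsto_sandwich[OF _ _ tendsto_const lim0])
    show "\<forall>\<^sub>F n in sequentially. 0 \<le> c * log 2 (1 + g n)" using lpos by simp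
    show "\<forall>\<^sub>F n in sequentially. c * log 2 (1 + g n) \<le> T \<xi>s - T (z n)"
      using eventually_ge_at_top[of 1] by eventually_elim (rule bnd)
  qed
  then have "(\<lambda>N. c * log 2 (1 + g N) / c) \<longlonglongrightarrow> 0 / c" by (intro tendsto_divide tendsto_const) (use cp in auto)
  then have L0: "(\<lambda>N. log 2 (1 + g N)) \<longlonglongrightarrow> 0" using cp by simp
  have "(\<lambda>N. 2 powr log 2 (1 + g N)) \<longlonglongrightarrow> 2 powr 0"
    by (intro tendsto_powr tendsto_const L0) auto
  moreover have "2 powr log 2 (1 + g N) = 1 + g N" for N using gn[of N] by (simp add: add_pos_nonneg)
  ultimately have "(\<lambda>N. 1 + g N) \<longlonglongrightarrow> 1" by simp
  then have "(\<lambda>N. (1 + g N) - 1) \<longlonglongrightarrow> 1 - 1" by (intro tendsto_diff tendsto_const)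
  then have "(\<lambda>N. g N) \<longlonglongrightarrow> 0" by simp
  then have "(\<lambda>N. g N * (K / \<gamma>^2)) \<longlonglongrightarrow> 0 * (K / \<gamma>^2)" by (intro tendsto_mult tendsto_const)
  moreover have "g N * (K / \<gamma>^2) = (d N)^2" for N unfolding g_def using Kp assms by (simp add: field_simps)
  ultimately have "(\<lambda>N. (d N)^2) \<longlonglongrightarrow> 0" by simp
  then have "(\<lambda>N. sqrt ((d N)^2)) \<longlonglongrightarrow> sqrt 0" by (intro tendsto_real_sqrt)
  then have "(\<lambda>N. \<bar>d N\<bar>) \<longlonglongrightarrow> 0" by simp
  then have "(\<lambda>N. d N) \<longlonglongrightarrow> 0" by (simp add: tendsto_rabs_zero_iff)
  then have "(\<lambda>N. d N + \<xi>s j) \<longlonglongrightarrow> 0 + \<xi>s j" by (intro tendsto_add tendsto_const)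
  then have ylim: "(\<lambda>N. y N j) \<longlonglongrightarrow> \<xi>s j" unfolding d_def by simp
  show ?thesis
  proof (rule Lim_transform_eventually[OF ylim])
    show "\<forall>\<^sub>F N in sequentially. y N j = \<xi>N N j"
      using eventually_ge_at_top[of j] by eventually_elim (simp add: y_def)
  qed
qed

end
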